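(* For every natural number $n\geq 2$, the $n$-Split Interval $S_n(I)$ contains no subspace homeomorphic to $D_n(2^{\mathbb{N}})$, and $D_n(2^{\mathbb{N}})$ contains no subspace homeomorphic to $S_n(I)$.
   Context: Let $I=[0,1]$. For $n\geq 2$, $S_n(I)$ is the set $I\times\{0,\ldots,n-1\}$ with the topology in which the points $(x,i)$ with $i\in\{2,\ldots,n-1\}$ are isolated, a point $(x,0)$ with $x>0$ has basic neighbourhoods $\{(x,0)\}\cup\{(y,i): z_0<y<x,\ i\in\{0,\ldots,n-1\}\}$ for $z_0\in I$, $z_0<x$, a point $(x,1)$ with $x<1$ has basic neighbourhoods $\{(x,1)\}\cup\{(y,i): x<y<z_1,\ i\in\{0,\ldots,n-1\}\}$ for $z_1\in I$, $z_1>x$, and the points $(0,0)$ and $(1,1)$ are isolated. For $n\geq 2$ and a Hausdorff space $X$, the Alexandroff $n$-plicate $D_n(X)$ is the set $X\times\{0,\ldots,n-1\}$ with the topology in which the points $(x,i)$ with $i\in\{1,\ldots,n-1\}$ are isolated and a point $(x,0)$ has basic neighbourhoods $\mathscr{U}\times\{0,\ldots,n-1\}\setminus\{(x,i):1\leq i\leq n-1\}$, where $\mathscr{U}$ ranges over neighbourhoods of $x$ in $X$. $2^{\mathbb{N}}$ is the Cantor space. *)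

theory Defs
  imports "HOL-Analysis.Analysis"
begin

definition split_interval :: "nat \<Rightarrow> (real \<times> nat) topology" where
  "split_interval n = topology_generated_by
     ({{(x, i)} | x i. 0 \<le> x \<and> x \<le> 1 \<and> 2 \<le> i \<and> i < n}
      \<union> {{(0, 0)}, {(1, 1)}}
      \<union> {insert (x, 0) {(y, i). z < y \<and> y < x \<and> i < n} | x z.
            0 < x \<and> x \<le> 1 \<and> 0 \<le> z \<and> z < x}
      \<union> {insert (x, 1) {(y, i). x < y \<and> y < z \<and> i < n} | x z.
            0 \<le> x \<and> x < 1 \<and> x < z \<and> z \<le> 1})"

definition alexandroff_nplicate :: "'a topology \<Rightarrow> nat \<Rightarrow> ('a \<times> nat) topology" where
  "alexandroff_nplicate X n = topology_generated_by
     ({{(x, i)} | x i. x \<in> topspace X \<and> 1 \<le> i \<and> i < n}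
      \<union> {U \<times> {0..<n} - {(x, i) | i. 1 \<le> i \<and> i < n} | U x.
            openin X U \<and> x \<in> U})"

definition cantor_space :: "(nat \<Rightarrow> bool) topology" where
  "cantor_space = product_topology (\<lambda>_. discrete_topology (UNIV :: bool set)) UNIV"

end

theory Submission
  imports Defs
begin

lemma cantor_topspace[simp]: "topspace cantor_space = UNIV"
  unfolding cantor_space_def by (auto simp: PiE_def extensional_def)

lemma cantor_cyl:
  assumes "openin cantor_space U" "c \<in> U"
  shows "\<exists>k. \<forall>d. (\<forall>i<k. d i = c i) \<longrightarrow> d \<in> U"
proof -
  obtain V where V: "finite {i. V i \<noteq> UNIV}" "c \<in> Pi\<^sub>E UNIV V" "Pi\<^sub>E UNIV V \<subseteq> U"
    using assms unfolding cantor_space_def openin_product_topology_alt by fastforce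
  obtain k where k: "{i. V i \<noteq> UNIV} \<subseteq> {..<k}" using finite_nat_bounded[OF V(1)] by blast
  have "d \<in> U" if "\<forall>i<k. d i = c i" for d
  proof -
    have "d \<in> Pi\<^sub>E UNIV V"
    proof (auto simp: PiE_def extensional_def Pi_def)
      fix i show "d i \<in> V i"
      proof (cases "i < k")
        case True then show ?thesis using that V(2) by (auto simp: PiE_def Pi_def)
      next
        case False then show ?thesis using k by auto
      qed
    qed
    then show ?thesis using V(3) by blast
  qed
  then show ?thesis by blast
qed

lemma cantor_not_open_singleton: "\<not> openin cantor_space {c}"
proof
  assume "openin cantor_space {c}"
  then obtain k where "\<forall>d. (\<forall>i<k. d i = c i) \<longrightarrow> d \<in> {c}" using cantor_cyl by blast
  then have "c(k := \<not> c k) \<in> {c}" by auto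
  then have "(c(k := \<not> c k)) k = c k" by simp
  then show False by simp
qed

lemma cantor_uncountable: "\<not> countable (UNIV :: (nat \<Rightarrow> bool) set)"
proof
  assume c: "countable (UNIV :: (nat \<Rightarrow> bool) set)"
  have "infinite (UNIV :: (nat \<Rightarrow> bool) set)"
  proof
    assume "finite (UNIV :: (nat \<Rightarrow> bool) set)"
    moreover have "inj (\<lambda>k::nat. \<lambda>i. i = k)" by (auto simp: inj_on_def fun_eq_iff)
    ultimately have "finite (UNIV :: nat set)" using finite_imageD[of "\<lambda>k::nat. \<lambda>i. i = k" UNIV]
      by (metis finite_subset subset_UNIV)
    then show False by simp
  qed
  then obtain f :: "nat \<Rightarrow> nat \<Rightarrow> bool" where "UNIV = range f"
    using countable_as_injective_image[OF c] by metis
  then obtain k where "(\<lambda>i. \<not> f i i) = f k" by (metis UNIV_I imageE)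
  then show False by (metis (mono_tags))
qed

lemma adx_open_level0:
  assumes "openin (alexandroff_nplicate X n) W"
  shows "openin X {x. (x, 0) \<in> W}"
  using assms unfolding alexandroff_nplicate_def openin_topology_generated_by_iff
proof (induction rule: generate_topology_on.induct)
  case Empty then show ?case by simp
next
  case (Int a b)
  have "{x. (x, 0) \<in> a \<inter> b} = {x. (x, 0) \<in> a} \<inter> {x. (x, 0) \<in> b}" by auto
  then show ?case using Int by auto
next
  case (UN K)
  have "{x. (x, 0) \<in> \<Union>K} = \<Union>((\<lambda>k. {x. (x, 0) \<in> k}) ` K)" by auto
  then show ?case using UN by auto
next
  case (Basis s)
  then show ?case
  proof (elim UnE CollectE exE conjE)
    fix x i assume "s = {(x, i)}" "1 \<le> i"
    then have "{x. (x, 0) \<in> s} = {}" by auto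
    then show ?thesis by simp
  next
    fix U x assume s: "s = U \<times> {0..<n} - {(x, i) |i. 1 \<le> i \<and> i < n}" "openin X U"
    show ?thesis
    proof (cases "0 < n")
      case True
      then have "{x. (x, 0) \<in> s} = U" using s by auto
      then show ?thesis using s by simp
    next
      case False
      then have "{x. (x, 0) \<in> s} = {}" using s by auto
      then show ?thesis by simp
    qed
  qed
qed

lemma adx_open_single:
  assumes "x \<in> topspace X" "1 \<le> i" "i < n"
  shows "openin (alexandroff_nplicate X n) {(x, i)}"
  unfolding alexandroff_nplicate_def openin_topology_generated_by_iff
  by (rule generate_topology_on.Basis) (use assms in blast)

lemma adx_topspace:
  "topspace (alexandroff_nplicate X n) = topspace X \<times> {0..<n}"
  unfolding alexandroff_nplicate_def topology_generated_by_topspace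
proof (intro equalityI subsetI)
  fix p assume "p \<in> \<Union> ({{(x, i)} |x i. x \<in> topspace X \<and> 1 \<le> i \<and> i < n} \<union>
            {U \<times> {0..<n} - {(x, i) |i. 1 \<le> i \<and> i < n} | U x. openin X U \<and> x \<in> U})"
  then obtain s where s: "p \<in> s" "s \<in> {{(x, i)} |x i. x \<in> topspace X \<and> 1 \<le> i \<and> i < n} \<union>
            {U \<times> {0..<n} - {(x, i) |i. 1 \<le> i \<and> i < n} | U x. openin X U \<and> x \<in> U}"
    by (rule UnionE)
  from s(2) show "p \<in> topspace X \<times> {0..<n}"
  proof (elim UnE)
    assume "s \<in> {{(x, i)} |x i. x \<in> topspace X \<and> 1 \<le> i \<and> i < n}"
    then obtain x i where "s = {(x, i)}" "x \<in> topspace X" "i < n" by blast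
    then show ?thesis using s(1) by simp
  next
    assume "s \<in> {U \<times> {0..<n} - {(x, i) |i. 1 \<le> i \<and> i < n} | U x. openin X U \<and> x \<in> U}"
    then obtain U x where "s = U \<times> {0..<n} - {(x, i) |i. 1 \<le> i \<and> i < n}" "openin X U" by blast
    moreover have "U \<subseteq> topspace X" using \<open>openin X U\<close> by (rule openin_subset)
    ultimately show ?thesis using s(1) by blast
  qed
next
  fix p assume p: "p \<in> topspace X \<times> {0..<n}"
  obtain x i where pe: "p = (x, i)" by fastforce
  show "p \<in> \<Union> ({{(x, i)} |x i. x \<in> topspace X \<and> 1 \<le> i \<and> i < n} \<union>
            {U \<times> {0..<n} - {(x, i) |i. 1 \<le> i \<and> i < n} | U x. openin X U \<and> x \<in> U})"
  proof (cases "i = 0")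
    case True
    have "p \<in> topspace X \<times> {0..<n} - {(x, i) |i. 1 \<le> i \<and> i < n}" using p True pe by auto
    moreover have "topspace X \<times> {0..<n} - {(x, i) |i. 1 \<le> i \<and> i < n} \<in>
       {U \<times> {0..<n} - {(x, i) |i. 1 \<le> i \<and> i < n} | U x. openin X U \<and> x \<in> U}"
      using p pe by blast
    ultimately show ?thesis by blast
  next
    case False
    have "{(x, i)} \<in> {{(x, i)} |x i. x \<in> topspace X \<and> 1 \<le> i \<and> i < n}"
      using p pe False by auto
    then show ?thesis using pe by blast
  qed
qed

definition G0 :: "nat \<Rightarrow> real \<Rightarrow> (real \<times> nat) set" where
  "G0 n x = insert (x, 0) {(y, i). 0 < y \<and> y < x \<and> i < n}"
definition G1 :: "nat \<Rightarrow> real \<Rightarrow> (real \<times> nat) set" where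
  "G1 n x = insert (x, 1) {(y, i). x < y \<and> y < 1 \<and> i < n}"

lemma si_basis:
  assumes "s \<in> ({{(x, i)} | x i. 0 \<le> x \<and> x \<le> 1 \<and> 2 \<le> i \<and> i < n}
      \<union> {{(0, 0)}, {(1, 1)}}
      \<union> {insert (x, 0) {(y, i). z < y \<and> y < x \<and> i < n} | x z.
            0 < x \<and> x \<le> 1 \<and> 0 \<le> z \<and> z < x}
      \<union> {insert (x, 1) {(y, i). x < y \<and> y < z \<and> i < n} | x z.
            0 \<le> x \<and> x < 1 \<and> x < z \<and> z \<le> 1})"
  shows "openin (split_interval n) s"
  unfolding split_interval_def openin_topology_generated_by_iff
  by (rule generate_topology_on.Basis) (rule assms)

lemma si_open_single:
  assumes "0 \<le> x" "x \<le> 1" "2 \<le> i" "i < n"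
  shows "openin (split_interval n) {(x, i)}"
  by (rule si_basis) (use assms in blast)

lemma si_open_00: "openin (split_interval n) {(0, 0)}"
  by (rule si_basis) blast
lemma si_open_11: "openin (split_interval n) {(1, 1)}"
  by (rule si_basis) blast

lemma si_open_G0:
  assumes "0 < x" "x \<le> 1"
  shows "openin (split_interval n) (G0 n x)"
  unfolding G0_def by (rule si_basis) (use assms in blast)

lemma si_open_G1:
  assumes "0 \<le> x" "x < 1"
  shows "openin (split_interval n) (G1 n x)"
  unfolding G1_def by (rule si_basis) (use assms in blast)

lemma si_topspace:
  assumes "2 \<le> n" "p \<in> topspace (split_interval n)"
  shows "0 \<le> fst p \<and> fst p \<le> 1 \<and> snd p < n"
  using assms unfolding split_interval_def topology_generated_by_topspace
  by auto

lemma si_left: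
  assumes n2: "2 \<le> n" and "openin (split_interval n) W"
  shows "\<forall>x. 0 < x \<longrightarrow> (x, 0) \<in> W \<longrightarrow> (\<exists>z<x. \<forall>y. z < y \<and> y < x \<longrightarrow> (y, 0) \<in> W)"
  using assms(2) unfolding split_interval_def openin_topology_generated_by_iff
proof (induction rule: generate_topology_on.induct)
  case Empty then show ?case by simp
next
  case (Int a b)
  show ?case
  proof (intro allI impI)
    fix x :: real assume x: "0 < x" "(x, 0) \<in> a \<inter> b"
    obtain z1 where z1: "z1 < x" "\<forall>y. z1 < y \<and> y < x \<longrightarrow> (y, 0) \<in> a" using Int x by blast
    obtain z2 where z2: "z2 < x" "\<forall>y. z2 < y \<and> y < x \<longrightarrow> (y, 0) \<in> b" using Int x by blast
    show "\<exists>z<x. \<forall>y. z < y \<and> y < x \<longrightarrow> (y, 0) \<in> a \<inter> b"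
      by (rule exI[of _ "max z1 z2"]) (use z1 z2 in auto)
  qed
next
  case (UN K)
  show ?case
  proof (intro allI impI)
    fix x :: real assume x: "0 < x" "(x, 0) \<in> \<Union>K"
    then obtain k where k: "k \<in> K" "(x, 0) \<in> k" by blast
    then obtain z where "z < x" "\<forall>y. z < y \<and> y < x \<longrightarrow> (y, 0) \<in> k" using UN x by blast
    then show "\<exists>z<x. \<forall>y. z < y \<and> y < x \<longrightarrow> (y, 0) \<in> \<Union>K" using k by blast
  qed
next
  case (Basis s)
  show ?case
  proof (intro allI impI)
    fix x :: real assume x: "0 < x" "(x, 0) \<in> s"
    from Basis consider
        (a) x' i where "s = {(x', i)}" "2 \<le> i"
      | (b) "s = {(0, 0)}" | (c) "s = {(1, 1)}"
      | (d) x' z where "s = insert (x', 0) {(y, i). z < y \<and> y < x' \<and> i < n}" "z < x'"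
      | (e) x' z where "s = insert (x', 1) {(y, i). x' < y \<and> y < z \<and> i < n}" "0 \<le> x'"
    proof -
      assume a: "\<And>x' i. s = {(x', i)} \<Longrightarrow> 2 \<le> i \<Longrightarrow> thesis"
        and b: "s = {(0, 0)} \<Longrightarrow> thesis" and c: "s = {(1, 1)} \<Longrightarrow> thesis"
        and d: "\<And>x' z. s = insert (x', 0) {(y, i). z < y \<and> y < x' \<and> i < n} \<Longrightarrow> z < x' \<Longrightarrow> thesis"
        and e: "\<And>x' z. s = insert (x', 1) {(y, i). x' < y \<and> y < z \<and> i < n} \<Longrightarrow> 0 \<le> x' \<Longrightarrow> thesis"
      from Basis show thesis
      proof (elim UnE)
        assume "s \<in> {{(x, i)} | x i. 0 \<le> x \<and> x \<le> 1 \<and> 2 \<le> i \<and> i < n}"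
        then obtain x' i where "s = {(x', i)}" "2 \<le> i" by blast
        then show thesis by (rule a)
      next
        assume "s \<in> {{(0, 0)}, {(1, 1)}}"
        then show thesis using b c by blast
      next
        assume "s \<in> {insert (x, 0) {(y, i). z < y \<and> y < x \<and> i < n} | x z.
            0 < x \<and> x \<le> 1 \<and> 0 \<le> z \<and> z < x}"
        then obtain x' z where "s = insert (x', 0) {(y, i). z < y \<and> y < x' \<and> i < n}" "z < x'" by blast
        then show thesis by (rule d)
      next
        assume "s \<in> {insert (x, 1) {(y, i). x < y \<and> y < z \<and> i < n} | x z.
            0 \<le> x \<and> x < 1 \<and> x < z \<and> z \<le> 1}"
        then obtain x' z where "s = insert (x', 1) {(y, i). x' < y \<and> y < z \<and> i < n}" "0 \<le> x'" by blast
        then show thesis by (rule e)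
      qed
    qed
    then show "\<exists>z<x. \<forall>y. z < y \<and> y < x \<longrightarrow> (y, 0) \<in> s"
    proof cases
      case a then show ?thesis using x by auto
    next
      case b then show ?thesis using x by auto
    next
      case c then show ?thesis using x by auto
    next
      case (d x' z)
      then have "x = x' \<or> (z < x \<and> x < x' \<and> 0 < n)" using x n2 by auto
      then show ?thesis
      proof
        assume "x = x'" then show ?thesis using d n2 by (intro exI[of _ z]) auto
      next
        assume h: "z < x \<and> x < x' \<and> 0 < n"
        then show ?thesis using d n2 by (intro exI[of _ z]) auto
      qed
    next
      case (e x' z)
      then have h: "x' < x \<and> x < z \<and> 0 < n" using x n2 by auto
      then show ?thesis using e by (intro exI[of _ x']) auto
    qed
  qed
qed

lemma si_not_open_single:
  assumes "2 \<le> n" "0 < x"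
  shows "\<not> openin (split_interval n) {(x, 0)}"
proof
  assume o: "openin (split_interval n) {(x, 0)}"
  have "(x, 0) \<in> {(x, 0::nat)}" by simp
  from si_left[OF assms(1) o, rule_format, OF assms(2) this]
  obtain z where z: "z < x" "\<forall>y. z < y \<and> y < x \<longrightarrow> (y, 0) \<in> {(x, 0::nat)}"
    by blast
  have "z < (z + x) / 2" "(z + x) / 2 < x" using z(1) by auto
  then have "((z + x) / 2, 0) \<in> {(x, 0 :: nat)}" using z(2) by blast
  then show False using z(1) by simp
qed


lemma part2:
  assumes n2: "2 \<le> n"
    and hm: "homeomorphic_maps (subtopology (alexandroff_nplicate cantor_space n) B) (split_interval n) f g"
  shows False
proof -
  let ?AD = "alexandroff_nplicate cantor_space n"
  let ?SI = "split_interval n"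
  let ?SB = "subtopology ?AD B"
  have fc: "continuous_map ?SB ?SI f" and gc: "continuous_map ?SI ?SB g"
    and fg: "\<forall>q\<in>topspace ?SB. g (f q) = q" and gf: "\<forall>p\<in>topspace ?SI. f (g p) = p"
    using hm unfolding homeomorphic_maps_def by auto
  define I where "I = {0<..<(1::real)}"
  have ts: "(x, 0) \<in> topspace ?SI" if "x \<in> I" for x
  proof -
    have "openin ?SI (G0 n x)" using that si_open_G0 unfolding I_def by auto
    then have "G0 n x \<subseteq> topspace ?SI" by (rule openin_subset)
    then show ?thesis unfolding G0_def by auto
  qed
  have gB: "g p \<in> topspace ?SB" if "p \<in> topspace ?SI" for p
    using gc that unfolding continuous_map_def by auto
  have lev: "snd (g (x, 0)) = 0" if x: "x \<in> I" for x
  proof (rule ccontr)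
    assume ne: "snd (g (x, 0)) \<noteq> 0"
    obtain c i where gi: "g (x, 0) = (c, i)" by fastforce
    have "g (x, 0) \<in> topspace ?AD \<inter> B" using gB[OF ts[OF x]] by simp
    then have iB: "(c, i) \<in> B" and "i < n" using gi adx_topspace[of cantor_space n] by auto
    then have "openin ?AD {(c, i)}" using ne gi by (intro adx_open_single) auto
    then have "openin ?SB ({(c, i)} \<inter> B)" by (rule openin_subtopology_Int)
    then have o: "openin ?SI {p \<in> topspace ?SI. g p \<in> {(c, i)} \<inter> B}"
      by (rule openin_continuous_map_preimage[OF gc])
    have "{p \<in> topspace ?SI. g p \<in> {(c, i)} \<inter> B} = {(x, 0)}"
    proof (intro equalityI subsetI)
      fix p assume p: "p \<in> {p \<in> topspace ?SI. g p \<in> {(c, i)} \<inter> B}"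
      then have "f (g p) = f (g (x, 0))" using gi by auto
      then show "p \<in> {(x, 0)}" using gf p ts[OF x] by auto
    next
      fix p assume "p \<in> {(x, 0::nat)}"
      then show "p \<in> {p \<in> topspace ?SI. g p \<in> {(c, i)} \<inter> B}" using ts[OF x] gi iB by auto
    qed
    with o have "openin ?SI {(x, 0)}" by simp
    then show False using si_not_open_single[OF n2] x unfolding I_def by auto
  qed
  define h where "h x = fst (g (x, 0))" for x
  have hg: "g (x, 0) = (h x, 0)" if "x \<in> I" for x
    using lev[OF that] unfolding h_def by (metis prod.collapse)
  have ex: "\<exists>k W. openin ?AD W \<and> {q \<in> topspace ?SB. f q \<in> G0 n x} = W \<inter> B
      \<and> (\<forall>d. (\<forall>i<k. d i = h x i) \<longrightarrow> (d, 0) \<in> W)" if x: "x \<in> I" for x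
  proof -
    have "openin ?SI (G0 n x)" using x si_open_G0 unfolding I_def by auto
    then have "openin ?SB {q \<in> topspace ?SB. f q \<in> G0 n x}"
      by (rule openin_continuous_map_preimage[OF fc])
    then obtain W where W: "openin ?AD W" "{q \<in> topspace ?SB. f q \<in> G0 n x} = W \<inter> B"
      unfolding openin_subtopology by blast
    have "f (g (x, 0)) = (x, 0)" using gf ts[OF x] by auto
    then have "g (x, 0) \<in> {q \<in> topspace ?SB. f q \<in> G0 n x}" using gB[OF ts[OF x]]
      unfolding G0_def by auto
    then have "(h x, 0) \<in> W" using W(2) hg[OF x] by auto
    then have "h x \<in> {c. (c, 0) \<in> W}" by simp
    moreover have "openin cantor_space {c. (c, 0) \<in> W}" using W(1) by (rule adx_open_level0)
    ultimately obtain k where "\<forall>d. (\<forall>i<k. d i = h x i) \<longrightarrow> d \<in> {c. (c, 0) \<in> W}"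
      using cantor_cyl by blast
    then show ?thesis using W by auto
  qed
  define P where "P x k W \<longleftrightarrow> openin ?AD W \<and> {q \<in> topspace ?SB. f q \<in> G0 n x} = W \<inter> B
      \<and> (\<forall>d. (\<forall>i<k. d i = h x i) \<longrightarrow> (d, 0) \<in> W)" for x k W
  define K where "K x = (SOME k. \<exists>W. P x k W)" for x
  define WW where "WW x = (SOME W. P x (K x) W)" for x
  have KW: "openin ?AD (WW x) \<and>
      {q \<in> topspace ?SB. f q \<in> G0 n x} = WW x \<inter> B
      \<and> (\<forall>d. (\<forall>i<K x. d i = h x i) \<longrightarrow> (d, 0) \<in> WW x)" if x: "x \<in> I" for x
  proof -
    have "\<exists>k W. P x k W" using ex[OF x] unfolding P_def .
    then have "\<exists>W. P x (K x) W" unfolding K_def by (rule someI_ex)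
    then have "P x (K x) (WW x)" unfolding WW_def by (rule someI_ex)
    then show ?thesis unfolding P_def .
  qed
  define key where "key x = map (h x) [0..<K x]" for x
  have le: "x' \<le> x" if x: "x \<in> I" and x': "x' \<in> I" and eq: "key x = key x'" for x x'
  proof -
    have "K x = K x'" using eq unfolding key_def by (metis length_map length_upt diff_zero)
    then have "\<forall>i\<in>set [0..<K x]. h x i = h x' i" using eq unfolding key_def by (simp add: map_eq_conv)
    then have "\<forall>i<K x. h x' i = h x i" by auto
    then have "(h x', 0) \<in> WW x" using KW[OF x] by blast
    moreover have "g (x', 0) \<in> topspace ?SB" using gB[OF ts[OF x']] .
    ultimately have "g (x', 0) \<in> {q \<in> topspace ?SB. f q \<in> G0 n x}"
      using KW[OF x] hg[OF x'] by auto
    then have "f (g (x', 0)) \<in> G0 n x" by simp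
    moreover have "f (g (x', 0)) = (x', 0)" using gf ts[OF x'] by auto
    ultimately show ?thesis unfolding G0_def by auto
  qed
  have "inj_on key I"
    by (rule inj_onI) (metis le order_antisym)
  moreover have "countable (key ` I)" by (rule countableI_type)
  ultimately have "countable I" using countable_image_inj_on by blast
  then show False unfolding I_def using uncountable_open_interval[of 0 1] by simp
qed


lemma part1:
  assumes n2: "2 \<le> n"
    and hm: "homeomorphic_maps (subtopology (split_interval n) A) (alexandroff_nplicate cantor_space n) f g"
  shows False
proof -
  let ?AD = "alexandroff_nplicate cantor_space n"
  let ?SI = "split_interval n"
  let ?SA = "subtopology ?SI A"
  have fc: "continuous_map ?SA ?AD f" and gc: "continuous_map ?AD ?SA g"
    and fg: "\<forall>q\<in>topspace ?SA. g (f q) = q" and gf: "\<forall>p\<in>topspace ?AD. f (g p) = p"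
    using hm unfolding homeomorphic_maps_def by auto
  have ts: "(c, 0) \<in> topspace ?AD" for c
    using n2 adx_topspace[of cantor_space n] by auto
  have gA: "g q \<in> topspace ?SI \<and> g q \<in> A" if "q \<in> topspace ?AD" for q
    using gc that unfolding continuous_map_def by auto
  have nonopen: "\<not> openin ?SI {g (c, 0)}" for c
  proof
    assume "openin ?SI {g (c, 0)}"
    then have "openin ?SA ({g (c, 0)} \<inter> A)" by (rule openin_subtopology_Int)
    then have o: "openin ?AD {q \<in> topspace ?AD. g q \<in> {g (c, 0)} \<inter> A}"
      by (rule openin_continuous_map_preimage[OF gc])
    have "{q \<in> topspace ?AD. g q \<in> {g (c, 0)} \<inter> A} = {(c, 0)}"
    proof (intro equalityI subsetI)
      fix q assume q: "q \<in> {q \<in> topspace ?AD. g q \<in> {g (c, 0)} \<inter> A}"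
      then have e: "f (g q) = f (g (c, 0))" by auto
      have e1: "f (g q) = q" using gf q by blast
      have e2: "f (g (c, 0)) = (c, 0)" using gf ts by blast
      have "q = (c, 0)" using e e1 e2 by argo
      then show "q \<in> {(c, 0)}" by (simp only: singleton_iff)
    next
      fix q assume "q \<in> {(c, 0::nat)}"
      then show "q \<in> {q \<in> topspace ?AD. g q \<in> {g (c, 0)} \<inter> A}" using ts gA[OF ts] by auto
    qed
    with o have "openin ?AD {(c, 0)}" by simp
    then have "openin cantor_space {c'. (c', 0) \<in> {(c, 0::nat)}}" by (rule adx_open_level0)
    moreover have "{c'. (c', 0) \<in> {(c, 0::nat)}} = {c}" by auto
    ultimately show False using cantor_not_open_singleton by simp
  qed
  have cls: "(snd (g (c, 0)) = 0 \<and> 0 < fst (g (c, 0)) \<and> fst (g (c, 0)) \<le> 1) \<or>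
             (snd (g (c, 0)) = 1 \<and> 0 \<le> fst (g (c, 0)) \<and> fst (g (c, 0)) < 1)" for c
  proof -
    obtain x i where gi: "g (c, 0) = (x, i)" by fastforce
    have "g (c, 0) \<in> topspace ?SI" using gA[OF ts[of c]] by blast
    from si_topspace[OF n2 this] have r: "0 \<le> x" "x \<le> 1" "i < n" using gi by auto
    have "\<not> (2 \<le> i)"
    proof
      assume "2 \<le> i" then have "openin ?SI {(x, i)}" using r by (intro si_open_single) auto
      then show False using nonopen[of c] gi by simp
    qed
    moreover have "\<not> (i = 0 \<and> x = 0)" using nonopen[of c] gi si_open_00[of n] by auto
    moreover have "\<not> (i = 1 \<and> x = 1)" using nonopen[of c] gi si_open_11[of n] by auto
    ultimately show ?thesis using gi r by auto
  qed
  define GG where "GG c = (if snd (g (c, 0)) = 0 then G0 n (fst (g (c, 0))) else G1 n (fst (g (c, 0))))" for c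
  have GGo: "openin ?SI (GG c)" for c
    using cls[of c] si_open_G0 si_open_G1 unfolding GG_def by auto
  have GGin: "g (c, 0) \<in> GG c" for c
  proof -
    obtain x i where gi: "g (c, 0) = (x, i)" by fastforce
    show ?thesis using cls[of c] unfolding GG_def G0_def G1_def gi by auto
  qed
  have ex: "\<exists>k. \<forall>d. (\<forall>i<k. d i = c i) \<longrightarrow> g (d, 0) \<in> GG c" for c
  proof -
    have "openin ?SA (GG c \<inter> A)" using GGo by (rule openin_subtopology_Int)
    then have o: "openin ?AD {q \<in> topspace ?AD. g q \<in> GG c \<inter> A}"
      by (rule openin_continuous_map_preimage[OF gc])
    have "c \<in> {c'. (c', 0) \<in> {q \<in> topspace ?AD. g q \<in> GG c \<inter> A}}"
      using ts GGin gA[OF ts] by auto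
    moreover have "openin cantor_space {c'. (c', 0) \<in> {q \<in> topspace ?AD. g q \<in> GG c \<inter> A}}"
      using o by (rule adx_open_level0)
    ultimately obtain k where "\<forall>d. (\<forall>i<k. d i = c i) \<longrightarrow>
        d \<in> {c'. (c', 0) \<in> {q \<in> topspace ?AD. g q \<in> GG c \<inter> A}}"
      using cantor_cyl by blast
    then show ?thesis by auto
  qed
  define K where "K c = (SOME k. \<forall>d. (\<forall>i<k. d i = c i) \<longrightarrow> g (d, 0) \<in> GG c)" for c
  have KP: "\<forall>d. (\<forall>i<K c. d i = c i) \<longrightarrow> g (d, 0) \<in> GG c" for c
    unfolding K_def by (rule someI_ex) (rule ex)
  define key where "key c = (snd (g (c, 0)), map c [0..<K c])" for c
  have mem: "g (c', 0) \<in> GG c" if eq: "key c = key c'" for c c'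
  proof -
    have "K c = K c'" using eq unfolding key_def by (metis snd_conv length_map length_upt diff_zero)
    then have "\<forall>i\<in>set [0..<K c]. c i = c' i" using eq unfolding key_def by (simp add: map_eq_conv)
    then have "\<forall>i<K c. c' i = c i" by auto
    then show ?thesis using KP[of c] by blast
  qed
  have "inj_on key UNIV"
  proof (rule inj_onI)
    fix c c' assume eq: "key c = key c'"
    have l: "snd (g (c, 0)) = snd (g (c', 0))" using eq unfolding key_def by simp
    have m1: "g (c', 0) \<in> GG c" using mem eq by blast
    have m2: "g (c, 0) \<in> GG c'" using mem[of c' c] eq by simp
    obtain x i where gi: "g (c, 0) = (x, i)" by fastforce
    obtain x' i' where gi': "g (c', 0) = (x', i')" by fastforce
    have ii: "i = i'" using l gi gi' by simp
    have "x = x'"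
    proof (cases "i = 0")
      case True
      have "GG c = G0 n x" "GG c' = G0 n x'" using gi gi' ii True unfolding GG_def by simp_all
      then have "(x', 0) \<in> G0 n x" "(x, 0) \<in> G0 n x'" using m1 m2 gi gi' ii True by simp_all
      then have "x' \<le> x" "x \<le> x'" unfolding G0_def by auto
      then show ?thesis by simp
    next
      case False
      have "GG c = G1 n x" "GG c' = G1 n x'" using gi gi' ii False unfolding GG_def by simp_all
      moreover have "i = 1" using cls[of c] gi False by simp
      ultimately have "(x', 1) \<in> G1 n x" "(x, 1) \<in> G1 n x'" using m1 m2 gi gi' ii by simp_all
      then have "x \<le> x'" "x' \<le> x" unfolding G1_def by auto
      then show ?thesis by simp
    qed
    then have "g (c, 0) = g (c', 0)" using gi gi' ii by simp
    then have "f (g (c, 0)) = f (g (c', 0))" by simp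
    then have "(c, 0::nat) = (c', 0)" using gf ts by simp
    then show "c = c'" by simp
  qed
  moreover have "countable (key ` UNIV)" by (rule countableI_type)
  ultimately have "countable (UNIV :: (nat \<Rightarrow> bool) set)" using countable_image_inj_on by blast
  then show False using cantor_uncountable by simp
qed

theorem mainTheorem10:
  fixes n :: nat
  assumes "2 \<le> n"
  shows "\<not> (\<exists>A. A \<subseteq> topspace (split_interval n) \<and>
              subtopology (split_interval n) A homeomorphic_space alexandroff_nplicate cantor_space n)
       \<and> \<not> (\<exists>B. B \<subseteq> topspace (alexandroff_nplicate cantor_space n) \<and>
              subtopology (alexandroff_nplicate cantor_space n) B homeomorphic_space split_interval n)"
  using part1[OF assms] part2[OF assms] unfolding homeomorphic_space_def by blast

end
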